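(* Let $M$ be a gasket automaton over $\Sigma=\{1,\dots,N\}$. For any $\mathbf x,\mathbf y,\mathbf z\in\Sigma^\infty$, $$\min\{T_M(\mathbf x,\mathbf y),T_M(\mathbf x,\mathbf z)\}\le T_M(\mathbf y,\mathbf z)+1.$$
   Context: A $\Sigma$-automaton $M$ has finite state set $Q=Q_0\cup\{Id,Exit\}$, input alphabet $\Sigma^2$, initial state $Id$, final state $Exit$, transition $\delta:Q\times\Sigma^2\to Q$ with $\delta(Id,(i,j))=Id$ iff $i=j$. Itinerary of $(\mathbf x,\mathbf y)\in\Sigma^\infty\times\Sigma^\infty$: $S_0=Id$, $S_k=\delta(S_{k-1},(x_k,y_k))$, stopped at $Exit$; surviving time $T_M(\mathbf x,\mathbf y)$ = largest $k$ with $S_k\neq Exit$ ($\infty$ if $Exit$ never reached; $\infty+1=\infty$). Triangle automaton: $\alpha,\beta,\gamma$ distinct elements of $\Sigma\cup\{-1,-2,-3\}$; $Q=\{S_{uv}:u\neq v\in\{\alpha,\beta,\gamma\}\}\cup\{Id,Exit\}$; $\delta(Id,(i,j))=S_{uv}\Rightarrow\delta(Id,(j,i))=S_{vu}$; $\delta(S_{uv},(i,j))=S_{uv}$ if $(i,j)=(v,u)$, else $Exit$. $\mathcal P_{uv}=\{(i,j):\delta(Id,(i,j))=S_{uv}\}$, $i\triangleleft_{uv}j$ iff $(i,j)\in\mathcal P_{uv}$ (iff $j\triangleleft_{vu}i$); $j$ is $uv$-minimal if there is no $i$ with $i\triangleleft_{uv}j$. Gasket automaton: triangle automaton with (Uniqueness)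 $i\triangleleft_{uv}j,i\triangleleft_{uv}j'\Rightarrow j=j'$; (Gathering) for $a,b,c\in\Sigma$ any two of $a\triangleleft_{\alpha\gamma}c$, $a\triangleleft_{\beta\gamma}b$, $b\triangleleft_{\alpha\beta}c$ imply the third; (Boundary) if $\alpha\in\Sigma$ it is $\alpha\gamma$- and $\alpha\beta$-minimal; if $\beta\in\Sigma$ it is $\beta\gamma$- and $\beta\alpha$-minimal; if $\gamma\in\Sigma$ it is $\gamma\alpha$- and $\gamma\beta$-minimal. *)

theory Defs
  imports Main "HOL-Library.Extended_Nat"
begin

datatype state = Id | Exit | S int int

(* The alphabet Sigma = {1,...,N}, letters as integers so that the labels
   alpha, beta, gamma may also be -1, -2, -3. *)
definition Sig :: "nat \<Rightarrow> int set" where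
  "Sig N = {1 .. int N}"

definition corners :: "int \<Rightarrow> int \<Rightarrow> int \<Rightarrow> int set" where
  "corners a b c = {a, b, c}"

definition Qset :: "int \<Rightarrow> int \<Rightarrow> int \<Rightarrow> state set" where
  "Qset a b c = {S u v | u v. u \<in> corners a b c \<and> v \<in> corners a b c \<and> u \<noteq> v} \<union> {Id, Exit}"

definition triangle_automaton ::
  "nat \<Rightarrow> int \<Rightarrow> int \<Rightarrow> int \<Rightarrow> (state \<Rightarrow> int \<times> int \<Rightarrow> state) \<Rightarrow> bool" where
  "triangle_automaton N a b c \<delta> \<longleftrightarrow>
     a \<noteq> b \<and> b \<noteq> c \<and> a \<noteq> c \<and>
     a \<in> Sig N \<union> {-1,-2,-3} \<and> b \<in> Sig N \<union> {-1,-2,-3} \<and> c \<in> Sig N \<union> {-1,-2,-3} \<and>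
     (\<forall>q \<in> Qset a b c. \<forall>i \<in> Sig N. \<forall>j \<in> Sig N. \<delta> q (i, j) \<in> Qset a b c) \<and>
     (\<forall>i \<in> Sig N. \<forall>j \<in> Sig N. \<delta> Id (i, j) = Id \<longleftrightarrow> i = j) \<and>
     (\<forall>i \<in> Sig N. \<forall>j \<in> Sig N. \<forall>u v. \<delta> Id (i, j) = S u v \<longrightarrow> \<delta> Id (j, i) = S v u) \<and>
     (\<forall>u \<in> corners a b c. \<forall>v \<in> corners a b c. u \<noteq> v \<longrightarrow>
        (\<forall>i \<in> Sig N. \<forall>j \<in> Sig N.
           \<delta> (S u v) (i, j) = (if (i, j) = (v, u) then S u v else Exit)))"

definition prec :: "nat \<Rightarrow> (state \<Rightarrow> int \<times> int \<Rightarrow> state) \<Rightarrow> int \<Rightarrow> int \<Rightarrow> int \<Rightarrow> int \<Rightarrow> bool" where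
  "prec N \<delta> u v i j \<longleftrightarrow> i \<in> Sig N \<and> j \<in> Sig N \<and> \<delta> Id (i, j) = S u v"

definition uv_minimal :: "nat \<Rightarrow> (state \<Rightarrow> int \<times> int \<Rightarrow> state) \<Rightarrow> int \<Rightarrow> int \<Rightarrow> int \<Rightarrow> bool" where
  "uv_minimal N \<delta> u v j \<longleftrightarrow> \<not> (\<exists>i \<in> Sig N. prec N \<delta> u v i j)"

definition gasket_automaton ::
  "nat \<Rightarrow> int \<Rightarrow> int \<Rightarrow> int \<Rightarrow> (state \<Rightarrow> int \<times> int \<Rightarrow> state) \<Rightarrow> bool" where
  "gasket_automaton N a b c \<delta> \<longleftrightarrow>
     triangle_automaton N a b c \<delta> \<and>
     \<comment> \<open>Uniqueness\<close>
     (\<forall>u \<in> corners a b c. \<forall>v \<in> corners a b c. u \<noteq> v \<longrightarrow>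
        (\<forall>i j j'. prec N \<delta> u v i j \<and> prec N \<delta> u v i j' \<longrightarrow> j = j')) \<and>
     \<comment> \<open>Gathering\<close>
     (\<forall>x \<in> Sig N. \<forall>y \<in> Sig N. \<forall>z \<in> Sig N.
        (prec N \<delta> a c x z \<and> prec N \<delta> b c x y \<longrightarrow> prec N \<delta> a b y z) \<and>
        (prec N \<delta> a c x z \<and> prec N \<delta> a b y z \<longrightarrow> prec N \<delta> b c x y) \<and>
        (prec N \<delta> b c x y \<and> prec N \<delta> a b y z \<longrightarrow> prec N \<delta> a c x z)) \<and>
     \<comment> \<open>Boundary\<close>
     (a \<in> Sig N \<longrightarrow> uv_minimal N \<delta> a c a \<and> uv_minimal N \<delta> a b a) \<and>
     (b \<in> Sig N \<longrightarrow> uv_minimal N \<delta> b c b \<and> uv_minimal N \<delta> b a b) \<and>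
     (c \<in> Sig N \<longrightarrow> uv_minimal N \<delta> c a c \<and> uv_minimal N \<delta> c b c)"

(* Infinite words over Sigma, 0-indexed: x k is the (k+1)-st letter x_{k+1}. *)
definition words :: "nat \<Rightarrow> (nat \<Rightarrow> int) set" where
  "words N = {x. \<forall>k. x k \<in> Sig N}"

primrec itin :: "(state \<Rightarrow> int \<times> int \<Rightarrow> state) \<Rightarrow> (nat \<Rightarrow> int) \<Rightarrow> (nat \<Rightarrow> int) \<Rightarrow> nat \<Rightarrow> state" where
  "itin \<delta> x y 0 = Id"
| "itin \<delta> x y (Suc k) = (if itin \<delta> x y k = Exit then Exit else \<delta> (itin \<delta> x y k) (x k, y k))"

definition surv :: "(state \<Rightarrow> int \<times> int \<Rightarrow> state) \<Rightarrow> (nat \<Rightarrow> int) \<Rightarrow> (nat \<Rightarrow> int) \<Rightarrow> enat" where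
  "surv \<delta> x y = (if \<exists>k. itin \<delta> x y k = Exit
                  then enat (GREATEST k. itin \<delta> x y k \<noteq> Exit) else \<infinity>)"

end

theory Submission
  imports Defs
begin

lemma tri_cl:
  "triangle_automaton N a b c \<delta> \<Longrightarrow> q \<in> Qset a b c \<Longrightarrow> i \<in> Sig N \<Longrightarrow> j \<in> Sig N \<Longrightarrow> \<delta> q (i, j) \<in> Qset a b c"
  unfolding triangle_automaton_def by blast

lemma tri_Id:
  "triangle_automaton N a b c \<delta> \<Longrightarrow> i \<in> Sig N \<Longrightarrow> j \<in> Sig N \<Longrightarrow> \<delta> Id (i, j) = Id \<longleftrightarrow> i = j"
  unfolding triangle_automaton_def by blast

lemma tri_S:
  "triangle_automaton N a b c \<delta> \<Longrightarrow> u \<in> corners a b c \<Longrightarrow> v \<in> corners a b c \<Longrightarrow> u \<noteq> v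
   \<Longrightarrow> i \<in> Sig N \<Longrightarrow> j \<in> Sig N \<Longrightarrow> \<delta> (S u v) (i, j) = (if (i, j) = (v, u) then S u v else Exit)"
  unfolding triangle_automaton_def by blast

lemma tri_Q:
  assumes T: "triangle_automaton N a b c \<delta>" and x: "x \<in> words N" and y: "y \<in> words N"
  shows "itin \<delta> x y n \<in> Qset a b c"
proof (induction n)
  case 0 then show ?case by (simp add: Qset_def)
next
  case (Suc n)
  have "x n \<in> Sig N" "y n \<in> Sig N" using x y by (auto simp: words_def)
  have cl: "\<forall>q \<in> Qset a b c. \<forall>i \<in> Sig N. \<forall>j \<in> Sig N. \<delta> q (i, j) \<in> Qset a b c"
    using T unfolding triangle_automaton_def by blast
  have "Exit \<in> Qset a b c" by (simp add: Qset_def)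
  then show ?case using Suc cl \<open>x n \<in> Sig N\<close> \<open>y n \<in> Sig N\<close> by simp
qed

lemma Q_cases:
  assumes "q \<in> Qset a b c"
  obtains "q = Id" | "q = Exit" | u v where "q = S u v" "u \<in> corners a b c" "v \<in> corners a b c" "u \<noteq> v"
  using assms unfolding Qset_def by blast

lemma itin_Id:
  assumes T: "triangle_automaton N a b c \<delta>" and x: "x \<in> words N" and y: "y \<in> words N"
  shows "itin \<delta> x y n = Id \<Longrightarrow> \<forall>k<n. x k = y k"
proof (induction n)
  case 0 then show ?case by simp
next
  case (Suc n)
  have s: "x n \<in> Sig N" "y n \<in> Sig N" using x y by (auto simp: words_def)
  have ne: "itin \<delta> x y n \<noteq> Exit" and d: "\<delta> (itin \<delta> x y n) (x n, y n) = Id"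
    using Suc.prems by (auto split: if_splits)
  from tri_Q[OF T x y, of n] show ?case
  proof (cases rule: Q_cases)
    case 1
    then have "x n = y n" using d tri_Id[OF T s] by simp
    then show ?thesis using Suc.IH 1 less_Suc_eq by auto
  next
    case 2 then show ?thesis using ne by simp
  next
    case (3 u v)
    then show ?thesis using d tri_S[OF T 3(2,3,4) s] by (simp split: if_splits)
  qed
qed

lemma itin_S:
  assumes T: "triangle_automaton N a b c \<delta>" and x: "x \<in> words N" and y: "y \<in> words N"
  shows "itin \<delta> x y n = S u v \<Longrightarrow> \<exists>p<n. (\<forall>k<p. x k = y k) \<and> \<delta> Id (x p, y p) = S u v
     \<and> (\<forall>k. p < k \<and> k < n \<longrightarrow> x k = v \<and> y k = u)"
proof (induction n)
  case 0 then show ?case by simp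
next
  case (Suc n)
  have s: "x n \<in> Sig N" "y n \<in> Sig N" using x y by (auto simp: words_def)
  have ne: "itin \<delta> x y n \<noteq> Exit" and d: "\<delta> (itin \<delta> x y n) (x n, y n) = S u v"
    using Suc.prems by (auto split: if_splits)
  from tri_Q[OF T x y, of n] show ?case
  proof (cases rule: Q_cases)
    case 1
    then show ?thesis using d itin_Id[OF T x y 1] by (intro exI[of _ n]) auto
  next
    case 2 then show ?thesis using ne by simp
  next
    case (3 u' v')
    then have "\<delta> (S u' v') (x n, y n) = (if (x n, y n) = (v', u') then S u' v' else Exit)"
      using tri_S[OF T _ _ _ s] by blast
    then have e: "u' = u" "v' = v" "x n = v" "y n = u" using d 3 by (auto split: if_splits)
    then obtain p where "p<n" "(\<forall>k<p. x k = y k) \<and> \<delta> Id (x p, y p) = S u v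
     \<and> (\<forall>k. p < k \<and> k < n \<longrightarrow> x k = v \<and> y k = u)" using Suc.IH 3 by auto
    then show ?thesis using e less_Suc_eq by (intro exI[of _ p]) auto
  qed
qed

lemma eq_Id:
  "(\<forall>k<n. x k = y k) \<Longrightarrow> triangle_automaton N a b c \<delta> \<Longrightarrow> x \<in> words N \<Longrightarrow> itin \<delta> x y n = Id"
proof (induction n)
  case 0 then show ?case by simp
next
  case (Suc n)
  have "x n \<in> Sig N" using Suc(4) by (auto simp: words_def)
  have "x n = y n" using Suc(2) by simp
  moreover have "\<delta> Id (x n, x n) = Id" using tri_Id[OF Suc(3)] \<open>x n \<in> Sig N\<close> by blast
  ultimately show ?case using Suc by simp
qed

lemma S_alive:
  assumes T: "triangle_automaton N a b c \<delta>" and x: "x \<in> words N" and y: "y \<in> words N"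
    and pre: "\<forall>k<p. x k = y k" and d: "\<delta> Id (x p, y p) = S u v"
    and uv: "u \<in> corners a b c" "v \<in> corners a b c" "u \<noteq> v"
  shows "p < n \<Longrightarrow> (\<forall>k. p < k \<and> k < n \<longrightarrow> x k = v \<and> y k = u) \<Longrightarrow> itin \<delta> x y n = S u v"
proof (induction n)
  case 0 then show ?case by simp
next
  case (Suc m)
  have s: "x m \<in> Sig N" "y m \<in> Sig N" using x y by (auto simp: words_def)
  show ?case
  proof (cases "m = p")
    case True
    then show ?thesis using eq_Id[OF pre T x] d by simp
  next
    case False
    then have "itin \<delta> x y m = S u v" "x m = v" "y m = u" using Suc by auto
    moreover have "\<delta> (S u v) (x m, y m) = (if (x m, y m) = (v, u) then S u v else Exit)"
      using tri_S[OF T uv s] by blast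
    ultimately show ?thesis by simp
  qed
qed

lemma exit_mono:
  assumes "itin \<delta> x y m = Exit"
  shows "m \<le> n \<Longrightarrow> itin \<delta> x y n = Exit"
proof (induction n)
  case 0 then show ?case using assms by simp
next
  case (Suc n)
  show ?case
  proof (cases "m = Suc n")
    case True then show ?thesis using assms by simp
  next
    case False then have "m \<le> n" using Suc.prems by simp
    then show ?thesis using Suc.IH by simp
  qed
qed

lemma surv_le:
  assumes "itin \<delta> x y (Suc k) = Exit"
  shows "surv \<delta> x y \<le> enat k"
proof -
  let ?P = "\<lambda>j. itin \<delta> x y j \<noteq> Exit"
  have b: "\<forall>j. ?P j \<longrightarrow> j \<le> k"
  proof (intro allI impI)
    fix j assume "?P j"
    show "j \<le> k"
    proof (rule ccontr)
      assume "\<not> j \<le> k"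
      then have "Suc k \<le> j" by simp
      then show False using exit_mono[OF assms] \<open>?P j\<close> by blast
    qed
  qed
  have "?P 0" by simp
  then have "?P (Greatest ?P)" using GreatestI_nat[of ?P 0 k] b by blast
  then have "Greatest ?P \<le> k" using b by blast
  moreover have "surv \<delta> x y = enat (Greatest ?P)" using assms unfolding surv_def by (metis (mono_tags, lifting))
  ultimately show ?thesis by simp
qed

lemma surv_fin:
  assumes "surv \<delta> x y = enat t"
  shows "itin \<delta> x y (Suc t) = Exit"
proof -
  let ?P = "\<lambda>j. itin \<delta> x y j \<noteq> Exit"
  have ex: "\<exists>k. itin \<delta> x y k = Exit"
  proof (rule ccontr)
    assume "\<not> ?thesis"
    then have "surv \<delta> x y = \<infinity>" unfolding surv_def by simp
    then show False using assms by simp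
  qed
  then obtain k where k: "itin \<delta> x y k = Exit" by blast
  have b: "\<forall>j. ?P j \<longrightarrow> j \<le> k"
  proof (intro allI impI)
    fix j assume "?P j"
    show "j \<le> k"
    proof (rule ccontr)
      assume "\<not> j \<le> k"
      then have "k \<le> j" by simp
      then show False using exit_mono[OF k] \<open>?P j\<close> by blast
    qed
  qed
  have "surv \<delta> x y = enat (Greatest ?P)" using ex unfolding surv_def by simp
  then have t: "t = Greatest ?P" using assms by simp
  show ?thesis
  proof (rule ccontr)
    assume "\<not> ?thesis"
    then have "Suc t \<le> Greatest ?P" using Greatest_le_nat[of ?P "Suc t" k] b by blast
    then show False using t by simp
  qed
qed

lemma conv:
  assumes T: "triangle_automaton N a b c \<delta>" and "i \<in> Sig N" "j \<in> Sig N" "\<delta> Id (i, j) = S u v"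
  shows "\<delta> Id (j, i) = S v u"
  using assms unfolding triangle_automaton_def by blast

lemma prec_conv:
  assumes T: "triangle_automaton N a b c \<delta>"
  shows "prec N \<delta> u v i j \<longleftrightarrow> prec N \<delta> v u j i"
  using conv[OF T] unfolding prec_def by blast

lemma bad:
  assumes G: "gasket_automaton N a b c \<delta>" and "v \<in> Sig N" "w \<in> Sig N" "\<delta> Id (v, w) = S u v"
    and "u \<in> corners a b c" "v \<in> corners a b c" "u \<noteq> v"
  shows False
proof -
  have T: "triangle_automaton N a b c \<delta>" using G by (simp add: gasket_automaton_def)
  have p: "prec N \<delta> v u w v" using conv[OF T] assms unfolding prec_def by blast
  have bd: "(a \<in> Sig N \<longrightarrow> uv_minimal N \<delta> a c a \<and> uv_minimal N \<delta> a b a) \<and>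
     (b \<in> Sig N \<longrightarrow> uv_minimal N \<delta> b c b \<and> uv_minimal N \<delta> b a b) \<and>
     (c \<in> Sig N \<longrightarrow> uv_minimal N \<delta> c a c \<and> uv_minimal N \<delta> c b c)"
    using G unfolding gasket_automaton_def by blast
  have "v = a \<or> v = b \<or> v = c" "u = a \<or> u = b \<or> u = c" using assms(5,6) unfolding corners_def by auto
  then have "uv_minimal N \<delta> v u v"
    using bd assms(2,7) by metis
  then show False using p assms(3) unfolding uv_minimal_def by blast
qed

lemma gather:
  assumes G: "gasket_automaton N a b c \<delta>" and s: "i \<in> Sig N" "j \<in> Sig N" "k \<in> Sig N"
    and d: "\<delta> Id (i, j) = S u v" "\<delta> Id (i, k) = S u' v"
    and c: "u \<in> corners a b c" "u' \<in> corners a b c" "v \<in> corners a b c" "u \<noteq> v" "u' \<noteq> v" "u \<noteq> u'"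
  shows "\<delta> Id (j, k) = S u' u"
proof -
  have T: "triangle_automaton N a b c \<delta>" using G by (simp add: gasket_automaton_def)
  have p1: "prec N \<delta> u v i j" and p2: "prec N \<delta> u' v i k" using s d by (auto simp: prec_def)
  have g: "\<forall>x \<in> Sig N. \<forall>y \<in> Sig N. \<forall>z \<in> Sig N.
        (prec N \<delta> a c x z \<and> prec N \<delta> b c x y \<longrightarrow> prec N \<delta> a b y z) \<and>
        (prec N \<delta> a c x z \<and> prec N \<delta> a b y z \<longrightarrow> prec N \<delta> b c x y) \<and>
        (prec N \<delta> b c x y \<and> prec N \<delta> a b y z \<longrightarrow> prec N \<delta> a c x z)"
    using G unfolding gasket_automaton_def by blast
  have r1: "\<And>X Y Z. X \<in> Sig N \<Longrightarrow> Y \<in> Sig N \<Longrightarrow> Z \<in> Sig N \<Longrightarrow> prec N \<delta> a c X Z \<Longrightarrow> prec N \<delta> b c X Y \<Longrightarrow> prec N \<delta> a b Y Z"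
    using g by blast
  have r2: "\<And>X Y Z. X \<in> Sig N \<Longrightarrow> Y \<in> Sig N \<Longrightarrow> Z \<in> Sig N \<Longrightarrow> prec N \<delta> a c X Z \<Longrightarrow> prec N \<delta> a b Y Z \<Longrightarrow> prec N \<delta> b c X Y"
    using g by blast
  have r3: "\<And>X Y Z. X \<in> Sig N \<Longrightarrow> Y \<in> Sig N \<Longrightarrow> Z \<in> Sig N \<Longrightarrow> prec N \<delta> b c X Y \<Longrightarrow> prec N \<delta> a b Y Z \<Longrightarrow> prec N \<delta> a c X Z"
    using g by blast
  note pc = prec_conv[OF T]
  have abc: "a \<noteq> b" "b \<noteq> c" "a \<noteq> c" using T unfolding triangle_automaton_def by blast+
  have cu: "u = a \<or> u = b \<or> u = c" and cu': "u' = a \<or> u' = b \<or> u' = c" and cv: "v = a \<or> v = b \<or> v = c"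
    using c unfolding corners_def by auto
  have "prec N \<delta> u' u j k"
  proof -
    consider "v = c" "u = b" "u' = a" | "v = c" "u = a" "u' = b" | "v = a" "u = b" "u' = c"
      | "v = a" "u = c" "u' = b" | "v = b" "u = a" "u' = c" | "v = b" "u = c" "u' = a"
      using cu cu' cv c(4,5,6) by blast
    then show ?thesis
    proof cases
      case 1 then show ?thesis using r1[OF s(1) s(2) s(3)] p1 p2 by simp
    next
      case 2 then show ?thesis using r1[OF s(1) s(3) s(2)] p1 p2 pc by simp
    next
      case 3 then show ?thesis using r2[OF s(3) s(2) s(1)] p1 p2 pc by simp
    next
      case 4 then show ?thesis using r2[OF s(2) s(3) s(1)] p1 p2 pc by simp
    next
      case 5 then show ?thesis using r3[OF s(3) s(1) s(2)] p1 p2 pc by simp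
    next
      case 6 then show ?thesis using r3[OF s(2) s(1) s(3)] p1 p2 pc by simp
    qed
  qed
  then show ?thesis by (simp add: prec_def)
qed

lemma key:
  assumes G: "gasket_automaton N a b c \<delta>"
    and x: "x \<in> words N" and y: "y \<in> words N" and z: "z \<in> words N"
    and axy: "itin \<delta> x y (Suc n) \<noteq> Exit" and axz: "itin \<delta> x z (Suc n) \<noteq> Exit"
  shows "itin \<delta> y z n \<noteq> Exit"
proof -
  have T: "triangle_automaton N a b c \<delta>" using G by (simp add: gasket_automaton_def)
  have sx: "\<And>k. x k \<in> Sig N" and sy: "\<And>k. y k \<in> Sig N" and sz: "\<And>k. z k \<in> Sig N"
    using x y z by (auto simp: words_def)
  have axy': "itin \<delta> x y n \<noteq> Exit" using axy exit_mono[of \<delta> x y n "Suc n"] by auto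
  have axz': "itin \<delta> x z n \<noteq> Exit" using axz exit_mono[of \<delta> x z n "Suc n"] by auto
  from tri_Q[OF T x y, of "Suc n"] show ?thesis
  proof (cases rule: Q_cases)
    case 1
    then have hxy: "\<forall>k<Suc n. x k = y k" using itin_Id[OF T x y] by blast
    from tri_Q[OF T x z, of n] show ?thesis
    proof (cases rule: Q_cases)
      case 1
      then have "\<forall>k<n. x k = z k" using itin_Id[OF T x z] by blast
      then have "\<forall>k<n. y k = z k" using hxy by auto
      then show ?thesis using eq_Id[OF _ T y] by simp
    next
      case 2 then show ?thesis using axz' by simp
    next
      case (3 u v)
      then obtain p where p: "p<n" "\<forall>k<p. x k = z k" "\<delta> Id (x p, z p) = S u v"
        "\<forall>k. p < k \<and> k < n \<longrightarrow> x k = v \<and> z k = u" using itin_S[OF T x z] by blast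
      have "itin \<delta> y z n = S u v"
        apply (rule S_alive[OF T y z, of p u v])
        using p hxy 3 by auto
      then show ?thesis by simp
    qed
  next
    case 2 then show ?thesis using axy by simp
  next
    case (3 u v)
    then obtain p where p: "p<Suc n" "\<forall>k<p. x k = y k" "\<delta> Id (x p, y p) = S u v"
      "\<forall>k. p < k \<and> k < Suc n \<longrightarrow> x k = v \<and> y k = u" using itin_S[OF T x y] by blast
    note uv = 3
    from tri_Q[OF T x z, of "Suc n"] show ?thesis
    proof (cases rule: Q_cases)
      case 1
      then have hxz: "\<forall>k<Suc n. x k = z k" using itin_Id[OF T x z] by blast
      show ?thesis
      proof (cases "p < n")
        case True
        have "\<delta> Id (y p, z p) = S v u" using conv[OF T sx sy p(3)] hxz True by simp
        then have "itin \<delta> y z n = S v u"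
          apply (intro S_alive[OF T y z, of p v u])
          using p hxz uv True by auto
        then show ?thesis by simp
      next
        case False
        then have "\<forall>k<n. y k = z k" using p hxz by auto
        then show ?thesis using eq_Id[OF _ T y] by simp
      qed
    next
      case 2 then show ?thesis using axz by simp
    next
      case (3 u' v')
      note uv' = 3
      then obtain q where q: "q<Suc n" "\<forall>k<q. x k = z k" "\<delta> Id (x q, z q) = S u' v'"
        "\<forall>k. q < k \<and> k < Suc n \<longrightarrow> x k = v' \<and> z k = u'" using itin_S[OF T x z] by blast
      consider "p < q" | "q < p" | "p = q" by linarith
      then show ?thesis
      proof cases
        case 1
        have d: "\<delta> Id (y p, z p) = S v u" using conv[OF T sx sy p(3)] q 1 by simp
        have "\<forall>k. p < k \<and> k < n \<longrightarrow> y k = u \<and> z k = v"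
        proof (intro allI impI)
          fix k assume k: "p < k \<and> k < n"
          show "y k = u \<and> z k = v"
          proof (cases "k < q")
            case True then show ?thesis using p q k by auto
          next
            case False
            then have "x q = v" "x (Suc q) = v" "x (Suc q) = v'" using p q k 1 by auto
            then have "\<delta> Id (x q, z q) = S u' (x q)" using q(3) by simp
            from bad[OF G sx sz this] show ?thesis using uv uv' \<open>x q = v\<close> \<open>x (Suc q) = v'\<close> \<open>x (Suc q) = v\<close> by simp
          qed
        qed
        then have "itin \<delta> y z n = S v u"
          using S_alive[OF T y z, of p v u n] d p uv q 1 by auto
        then show ?thesis by simp
      next
        case 2
        have d: "\<delta> Id (y q, z q) = S u' v'" using p q 2 by simp
        have "\<forall>k. q < k \<and> k < n \<longrightarrow> y k = v' \<and> z k = u'"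
        proof (intro allI impI)
          fix k assume k: "q < k \<and> k < n"
          show "y k = v' \<and> z k = u'"
          proof (cases "k < p")
            case True then show ?thesis using p q k by auto
          next
            case False
            then have "x p = v'" "x (Suc p) = v" "x (Suc p) = v'" using p q k 2 by auto
            then have "\<delta> Id (x p, y p) = S u (x p)" using p(3) by simp
            from bad[OF G sx sy this] show ?thesis using uv uv' \<open>x p = v'\<close> \<open>x (Suc p) = v'\<close> \<open>x (Suc p) = v\<close> by simp
          qed
        qed
        then have "itin \<delta> y z n = S u' v'"
          using S_alive[OF T y z, of q u' v' n] d p uv' q 2 by auto
        then show ?thesis by simp
      next
        case 3
        show ?thesis
        proof (cases "p < n")
          case False
          then have "\<forall>k<n. y k = z k" using p q 3 by auto
          then show ?thesis using eq_Id[OF _ T y] by simp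
        next
          case True
          have vv: "v' = v" using p q 3 True by (metis Suc_mono lessI)
          show ?thesis
          proof (cases "y p = z p")
            case True
            then have "u' = u" using p q 3 vv by simp
            then have "\<forall>k<n. y k = z k" using p q 3 vv True
              by (metis less_SucI linorder_neqE_nat)
            then show ?thesis using eq_Id[OF _ T y] by simp
          next
            case False
            have "u \<noteq> u'"
            proof
              assume "u = u'"
              then have "prec N \<delta> u v (x p) (y p)" "prec N \<delta> u v (x p) (z p)"
                using p q 3 vv sx sy sz by (auto simp: prec_def)
              moreover have "\<forall>u \<in> corners a b c. \<forall>v \<in> corners a b c. u \<noteq> v \<longrightarrow>
                 (\<forall>i j j'. prec N \<delta> u v i j \<and> prec N \<delta> u v i j' \<longrightarrow> j = j')"
                using G unfolding gasket_automaton_def by blast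
              ultimately show False using False uv by blast
            qed
            then have d: "\<delta> Id (y p, z p) = S u' u"
            proof -
              have e: "\<delta> Id (x p, z p) = S u' v" using q(3) 3 vv by simp
              show ?thesis using gather[OF G sx sy sz p(3) e] uv uv' vv \<open>u \<noteq> u'\<close> by blast
            qed
            have "itin \<delta> y z n = S u' u"
              apply (rule S_alive[OF T y z _ d])
              using p q 3 uv uv' True vv \<open>u \<noteq> u'\<close> by auto
            then show ?thesis by simp
          qed
        qed
      qed
    qed
  qed
qed

theorem proposition3p1:
  fixes N :: nat and a b c :: int and \<delta> :: "state \<Rightarrow> int \<times> int \<Rightarrow> state"
    and x y z :: "nat \<Rightarrow> int"
  assumes "gasket_automaton N a b c \<delta>"
    and "x \<in> words N" and "y \<in> words N" and "z \<in> words N"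
  shows "min (surv \<delta> x y) (surv \<delta> x z) \<le> surv \<delta> y z + 1"
proof (cases "surv \<delta> y z")
  case infinity
  then show ?thesis by simp
next
  case (enat t)
  then have "itin \<delta> y z (Suc t) = Exit" by (rule surv_fin)
  then have "itin \<delta> x y (Suc (Suc t)) = Exit \<or> itin \<delta> x z (Suc (Suc t)) = Exit"
    using key[OF assms, of "Suc t"] by blast
  then have "surv \<delta> x y \<le> enat (Suc t) \<or> surv \<delta> x z \<le> enat (Suc t)"
    using surv_le by blast
  then have "min (surv \<delta> x y) (surv \<delta> x z) \<le> enat (Suc t)" by (auto simp: min_le_iff_disj)
  then show ?thesis using enat by (simp add: eSuc_enat[symmetric] eSuc_plus_1)
qed

end
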